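(* The Krull dimension of $\mathcal{A}(\bm{p})$ is infinite: for every $N\in\mathbb{N}$ there is a strictly decreasing chain $P_{N+1}\subsetneq P_N\subsetneq\cdots\subsetneq P_1$ of proper prime ideals of $\mathcal{A}(\bm{p})$.
   Context: Fix $\bm{p}:\mathbb{N}_0\to(0,\infty)$ with $\lim_{n\to\infty}\bm{p}(n)^{1/n}=\infty$. For an entire function $f$ write $f(z)=\sum_{n\ge0}\widehat f(n)z^n$. $\mathcal{A}(\bm{p})$ is the set of entire functions $f$ with $\sup_{n\ge 0}\bm{p}(n)|\widehat f(n)|<\infty$, with pointwise addition and scalar multiplication and the weighted Hadamard product $(f\ast g)(z)=\sum_{n\ge0}\bm{p}(n)\widehat f(n)\widehat g(n)z^n$; it is a commutative unital ring. The Krull dimension of a commutative ring is the supremum of lengths of chains of distinct proper prime ideals. *)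

theory Defs
  imports "HOL-Complex_Analysis.Complex_Analysis" "HOL-Algebra.QuotRing"
begin

definition taylor_coeff :: "(complex \<Rightarrow> complex) \<Rightarrow> nat \<Rightarrow> complex" where
  "taylor_coeff f n = (deriv ^^ n) f 0 / of_nat (fact n)"

definition A_carrier :: "(nat \<Rightarrow> real) \<Rightarrow> (complex \<Rightarrow> complex) set" where
  "A_carrier p = {f. f holomorphic_on UNIV \<and>
      bdd_above (range (\<lambda>n. p n * norm (taylor_coeff f n)))}"

definition hadamard :: "(nat \<Rightarrow> real) \<Rightarrow> (complex \<Rightarrow> complex) \<Rightarrow> (complex \<Rightarrow> complex) \<Rightarrow> complex \<Rightarrow> complex" where
  "hadamard p f g = (\<lambda>z. \<Sum>n. of_real (p n) * taylor_coeff f n * taylor_coeff g n * z ^ n)"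

definition A_ring :: "(nat \<Rightarrow> real) \<Rightarrow> (complex \<Rightarrow> complex) ring" where
  "A_ring p = \<lparr>carrier = A_carrier p,
               monoid.mult = hadamard p,
               one = (\<lambda>z. \<Sum>n. z ^ n / of_real (p n)),
               zero = (\<lambda>z. 0),
               add = (\<lambda>f g z. f z + g z)\<rparr>"

end

theory Submission
  imports Defs "HOL-Algebra.QuotRing"
begin


definition Bset :: "(nat \<Rightarrow> complex) set" where
  "Bset = {a. \<exists>C. \<forall>n. norm (a n) \<le> C}"
definition Psi :: "(nat \<Rightarrow> real) \<Rightarrow> (nat \<Rightarrow> complex) \<Rightarrow> complex \<Rightarrow> complex" where
  "Psi p a = (\<lambda>z. \<Sum>n. a n / complex_of_real (p n) * z ^ n)"
definition Phi :: "(nat \<Rightarrow> real) \<Rightarrow> (complex \<Rightarrow> complex) \<Rightarrow> nat \<Rightarrow> complex" where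
  "Phi p f = (\<lambda>n. complex_of_real (p n) * taylor_coeff f n)"

context
  fixes p :: "nat \<Rightarrow> real"
  assumes pos: "\<And>n. p n > 0"
    and growth: "filterlim (\<lambda>n. root n (p n)) at_top sequentially"
begin

lemma p_big:
  assumes K: "K \<ge> 0"
  shows "eventually (\<lambda>n. K ^ n \<le> p n) sequentially"
proof -
  have "eventually (\<lambda>n. K \<le> root n (p n)) sequentially"
    using growth unfolding filterlim_at_top by blast
  moreover have "eventually (\<lambda>n. n > (0::nat)) sequentially"
    by (rule eventually_gt_at_top)
  ultimately show ?thesis
  proof eventually_elim
    case (elim n)
    have "K ^ n \<le> root n (p n) ^ n" using elim K by (intro power_mono) auto
    also have "\<dots> = p n" using elim pos[of n] by simp
    finally show ?case .
  qed
qed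

lemma summ:
  assumes a: "a \<in> Bset"
  shows "summable (\<lambda>n. a n / complex_of_real (p n) * z ^ n)"
proof -
  obtain C where C: "\<And>n. norm (a n) \<le> C" using a unfolding Bset_def by blast
  have C0: "C \<ge> 0" using C[of 0] norm_ge_zero order_trans by blast
  define K where "K = 2 * (norm z + 1)"
  have K0: "K > 0" unfolding K_def using norm_ge_zero[of z] by (simp add: add_nonneg_pos)
  have ev: "eventually (\<lambda>n. K ^ n \<le> p n) sequentially" using p_big K0 by simp
  have "eventually (\<lambda>n. norm (a n / complex_of_real (p n) * z ^ n) \<le> C * (1/2) ^ n) sequentially"
    using ev
  proof eventually_elim
    case (elim n)
    have pn: "p n > 0" by (rule pos)
    have "norm (a n / complex_of_real (p n) * z ^ n) = norm (a n) * (norm z ^ n / p n)"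
      using pn by (simp add: norm_mult norm_divide norm_power)
    also have "\<dots> \<le> C * (norm z ^ n / K ^ n)"
    proof (rule mult_mono)
      show "norm z ^ n / p n \<le> norm z ^ n / K ^ n"
        using elim K0 pn by (intro divide_left_mono) auto
    qed (use C C0 pn in auto)
    also have "norm z ^ n / K ^ n = (norm z / K) ^ n" by (simp add: power_divide)
    also have "(norm z / K) ^ n \<le> (1/2) ^ n"
      using K0 by (intro power_mono) (auto simp: K_def field_simps)
    finally show ?case using C0 by (simp add: mult_left_mono)
  qed
  moreover have "summable (\<lambda>n. C * (1/2::real) ^ n)"
    by (intro summable_mult summable_geometric) auto
  ultimately show ?thesis by (rule summable_comparison_test_ev)
qed

lemma Psi_eval_fps:
  "Psi p a = eval_fps (Abs_fps (\<lambda>n. a n / complex_of_real (p n)))"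
  by (simp add: Psi_def eval_fps_def fun_eq_iff)

lemma Psi_props:
  assumes a: "a \<in> Bset"
  shows "Psi p a \<in> A_carrier p" "Phi p (Psi p a) = a"
proof -
  define F where "F = Abs_fps (\<lambda>n. a n / complex_of_real (p n))"
  have rad: "norm z < fps_conv_radius F" for z :: complex
  proof -
    have "conv_radius (fps_nth F) \<ge> norm (of_real (norm z + 1) :: complex)"
      by (rule conv_radius_geI) (use summ[OF a] in \<open>simp add: F_def\<close>)
    then have "fps_conv_radius F \<ge> ereal (norm z + 1)"
      by (simp add: fps_conv_radius_def)
    moreover have "ereal (norm z) < ereal (norm z + 1)" by simp
    ultimately show ?thesis by (meson order_less_le_trans)
  qed
  have hol: "Psi p a holomorphic_on UNIV"
    unfolding Psi_eval_fps F_def[symmetric]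
    by (rule holomorphic_on_eval_fps) (use rad in \<open>auto simp: eball_def\<close>)
  have r0: "fps_conv_radius F > 0" using rad[of 0] by (simp add: zero_ereal_def)
  have tc: "taylor_coeff (Psi p a) n = a n / complex_of_real (p n)" for n
  proof -
    have "(eval_fps F) has_fps_expansion F" by (rule eval_fps_has_fps_expansion[OF r0])
    from fps_nth_fps_expansion[OF this, of n]
    show ?thesis
      by (simp add: taylor_coeff_def Psi_eval_fps F_def[symmetric]) (simp add: F_def)
  qed
  have pne: "complex_of_real (p n) \<noteq> 0" for n using pos[of n] by simp
  show "Phi p (Psi p a) = a"
    using pne by (simp add: Phi_def tc fun_eq_iff)
  obtain C where C: "\<And>n. norm (a n) \<le> C" using a unfolding Bset_def by blast
  have "p n * norm (taylor_coeff (Psi p a) n) = norm (a n)" for n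
    using pos[of n] by (simp add: tc norm_divide)
  then have "bdd_above (range (\<lambda>n. p n * norm (taylor_coeff (Psi p a) n)))"
    using C by (auto intro!: bdd_aboveI[of _ C])
  with hol show "Psi p a \<in> A_carrier p" by (simp add: A_carrier_def)
qed

lemma Phi_props:
  assumes f: "f \<in> A_carrier p"
  shows "Phi p f \<in> Bset" "Psi p (Phi p f) = f"
proof -
  from f obtain C where C: "\<And>n. p n * norm (taylor_coeff f n) \<le> C"
    unfolding A_carrier_def bdd_above_def by auto
  show "Phi p f \<in> Bset"
    unfolding Bset_def Phi_def using C pos
    by (auto simp: norm_mult intro!: exI[of _ C]) (metis abs_of_pos less_eq_real_def)
  have hol: "f holomorphic_on UNIV" using f by (simp add: A_carrier_def)
  show "Psi p (Phi p f) = f"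
  proof
    fix z
    have "(\<lambda>n. (deriv ^^ n) f 0 / fact n * (z - 0) ^ n) sums f z"
      by (rule holomorphic_power_series[of f 0 "norm z + 1"])
         (use hol in \<open>auto intro: holomorphic_on_subset\<close>)
    then have "(\<lambda>n. taylor_coeff f n * z ^ n) sums f z"
      by (simp add: taylor_coeff_def)
    moreover have "Phi p f n / complex_of_real (p n) = taylor_coeff f n" for n
      using pos[of n] by (simp add: Phi_def)
    ultimately show "Psi p (Phi p f) z = f z"
      by (simp add: Psi_def sums_iff)
  qed
qed

end



lemma Bset_add: "a \<in> Bset \<Longrightarrow> b \<in> Bset \<Longrightarrow> (\<lambda>n. a n + b n) \<in> Bset"
proof -
  assume "a \<in> Bset" "b \<in> Bset"
  then obtain C D where "\<And>n. norm (a n) \<le> C" "\<And>n. norm (b n) \<le> D" unfolding Bset_def by blast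
  then have "norm (a n + b n) \<le> C + D" for n by (meson add_mono norm_triangle_le)
  then show ?thesis unfolding Bset_def by blast
qed

lemma Bset_mult: "a \<in> Bset \<Longrightarrow> b \<in> Bset \<Longrightarrow> (\<lambda>n. a n * b n) \<in> Bset"
proof -
  assume "a \<in> Bset" "b \<in> Bset"
  then obtain C D where C: "\<And>n. norm (a n) \<le> C" and D: "\<And>n. norm (b n) \<le> D" unfolding Bset_def by blast
  then have "norm (a n * b n) \<le> C * D" for n
    unfolding norm_mult by (intro mult_mono) (auto intro: order_trans[OF norm_ge_zero])
  then show ?thesis unfolding Bset_def by blast
qed

lemma Bset_uminus: "a \<in> Bset \<Longrightarrow> (\<lambda>n. - a n) \<in> Bset"
  unfolding Bset_def by simp

lemma Bset_const: "(\<lambda>n. c) \<in> Bset"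
  unfolding Bset_def by blast

context
  fixes p :: "nat \<Rightarrow> real"
  assumes pos: "\<And>n. p n > 0"
    and growth: "filterlim (\<lambda>n. root n (p n)) at_top sequentially"
begin

lemma carrier_R: "carrier (A_ring p) = Psi p ` Bset"
proof
  show "carrier (A_ring p) \<subseteq> Psi p ` Bset"
    using Phi_props[OF pos growth] by (force simp: A_ring_def)
  show "Psi p ` Bset \<subseteq> carrier (A_ring p)"
    using Psi_props[OF pos growth] by (auto simp: A_ring_def)
qed

lemma Psi_inj: "inj_on (Psi p) Bset"
  by (metis Psi_props(2)[OF pos growth] inj_onI)

lemma add_R: "x \<oplus>\<^bsub>A_ring p\<^esub> y = (\<lambda>z. x z + y z)"
  by (simp add: A_ring_def)
lemma mult_R: "x \<otimes>\<^bsub>A_ring p\<^esub> y = hadamard p x y"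
  by (simp add: A_ring_def)
lemma one_R: "\<one>\<^bsub>A_ring p\<^esub> = Psi p (\<lambda>n. 1)"
  by (simp add: A_ring_def Psi_def)
lemma zero_R: "\<zero>\<^bsub>A_ring p\<^esub> = Psi p (\<lambda>n. 0)"
  by (simp add: A_ring_def Psi_def)

lemma Psi_add:
  assumes "a \<in> Bset" "b \<in> Bset"
  shows "Psi p a \<oplus>\<^bsub>A_ring p\<^esub> Psi p b = Psi p (\<lambda>n. a n + b n)"
proof -
  have "Psi p a z + Psi p b z = Psi p (\<lambda>n. a n + b n) z" for z
    unfolding Psi_def
    using suminf_add[OF summ[OF pos growth assms(1), of z] summ[OF pos growth assms(2), of z]]
    by (simp add: add_divide_distrib distrib_right)
  then show ?thesis by (simp add: add_R fun_eq_iff)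
qed

lemma tc_Psi:
  assumes "a \<in> Bset"
  shows "taylor_coeff (Psi p a) n = a n / complex_of_real (p n)"
proof -
  have "complex_of_real (p n) * taylor_coeff (Psi p a) n = a n"
    using Psi_props(2)[OF pos growth assms] by (simp add: Phi_def fun_eq_iff)
  then show ?thesis using pos[of n] by (simp add: field_simps)
qed

lemma Psi_mult:
  assumes "a \<in> Bset" "b \<in> Bset"
  shows "Psi p a \<otimes>\<^bsub>A_ring p\<^esub> Psi p b = Psi p (\<lambda>n. a n * b n)"
proof -
  have "complex_of_real (p n) * (a n / complex_of_real (p n)) * (b n / complex_of_real (p n))
        = a n * b n / complex_of_real (p n)" for n
    using pos[of n] by (simp add: field_simps)
  then show ?thesis
    unfolding mult_R hadamard_def tc_Psi[OF assms(1)] tc_Psi[OF assms(2)]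
    using pos by (simp add: Psi_def less_imp_neq[symmetric] field_simps)
qed

lemma cring_R: "cring (A_ring p)"
proof (rule cringI)
  show "abelian_group (A_ring p)"
  proof (rule abelian_groupI)
    fix x y assume "x \<in> carrier (A_ring p)" "y \<in> carrier (A_ring p)"
    then obtain a b where "a \<in> Bset" "b \<in> Bset" "x = Psi p a" "y = Psi p b"
      unfolding carrier_R by blast
    then show "x \<oplus>\<^bsub>A_ring p\<^esub> y \<in> carrier (A_ring p)"
      by (simp add: Psi_add carrier_R Bset_add)
  next
    show "\<zero>\<^bsub>A_ring p\<^esub> \<in> carrier (A_ring p)" by (simp add: zero_R carrier_R Bset_const)
  next
    fix x y z :: "complex \<Rightarrow> complex"
    show "(x \<oplus>\<^bsub>A_ring p\<^esub> y) \<oplus>\<^bsub>A_ring p\<^esub> z = x \<oplus>\<^bsub>A_ring p\<^esub> (y \<oplus>\<^bsub>A_ring p\<^esub> z)"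
      by (simp add: add_R add.assoc)
  next
    fix x y :: "complex \<Rightarrow> complex"
    show "x \<oplus>\<^bsub>A_ring p\<^esub> y = y \<oplus>\<^bsub>A_ring p\<^esub> x"
      by (simp add: add_R add.commute)
  next
    fix x :: "complex \<Rightarrow> complex"
    show "\<zero>\<^bsub>A_ring p\<^esub> \<oplus>\<^bsub>A_ring p\<^esub> x = x" by (simp add: add_R A_ring_def)
  next
    fix x assume "x \<in> carrier (A_ring p)"
    then obtain a where a: "a \<in> Bset" "x = Psi p a" unfolding carrier_R by blast
    show "\<exists>y\<in>carrier (A_ring p). y \<oplus>\<^bsub>A_ring p\<^esub> x = \<zero>\<^bsub>A_ring p\<^esub>"
      by (rule bexI[of _ "Psi p (\<lambda>n. - a n)"])
         (use a in \<open>simp_all add: Psi_add Bset_uminus zero_R carrier_R\<close>)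
  qed
next
  show "comm_monoid (A_ring p)"
  proof (rule comm_monoidI)
    fix x y assume "x \<in> carrier (A_ring p)" "y \<in> carrier (A_ring p)"
    then obtain a b where "a \<in> Bset" "b \<in> Bset" "x = Psi p a" "y = Psi p b"
      unfolding carrier_R by blast
    then show "x \<otimes>\<^bsub>A_ring p\<^esub> y \<in> carrier (A_ring p)"
      by (simp add: Psi_mult carrier_R Bset_mult)
    show "x \<otimes>\<^bsub>A_ring p\<^esub> y = y \<otimes>\<^bsub>A_ring p\<^esub> x"
      using \<open>a \<in> Bset\<close> \<open>b \<in> Bset\<close> \<open>x = _\<close> \<open>y = _\<close>
      by (simp add: Psi_mult mult.commute)
  next
    show "\<one>\<^bsub>A_ring p\<^esub> \<in> carrier (A_ring p)" by (simp add: one_R carrier_R Bset_const)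
  next
    fix x y z assume "x \<in> carrier (A_ring p)" "y \<in> carrier (A_ring p)" "z \<in> carrier (A_ring p)"
    then obtain a b c where "a \<in> Bset" "b \<in> Bset" "c \<in> Bset" "x = Psi p a" "y = Psi p b" "z = Psi p c"
      unfolding carrier_R by blast
    then show "(x \<otimes>\<^bsub>A_ring p\<^esub> y) \<otimes>\<^bsub>A_ring p\<^esub> z = x \<otimes>\<^bsub>A_ring p\<^esub> (y \<otimes>\<^bsub>A_ring p\<^esub> z)"
      by (simp add: Psi_mult Bset_mult mult.assoc)
  next
    fix x assume "x \<in> carrier (A_ring p)"
    then obtain a where "a \<in> Bset" "x = Psi p a" unfolding carrier_R by blast
    then show "\<one>\<^bsub>A_ring p\<^esub> \<otimes>\<^bsub>A_ring p\<^esub> x = x"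
      by (simp add: one_R Psi_mult Bset_const)
  qed
next
  fix x y z assume "x \<in> carrier (A_ring p)" "y \<in> carrier (A_ring p)" "z \<in> carrier (A_ring p)"
  then obtain a b c where "a \<in> Bset" "b \<in> Bset" "c \<in> Bset" "x = Psi p a" "y = Psi p b" "z = Psi p c"
    unfolding carrier_R by blast
  then show "(x \<oplus>\<^bsub>A_ring p\<^esub> y) \<otimes>\<^bsub>A_ring p\<^esub> z = x \<otimes>\<^bsub>A_ring p\<^esub> z \<oplus>\<^bsub>A_ring p\<^esub> y \<otimes>\<^bsub>A_ring p\<^esub> z"
    by (simp add: Psi_mult Psi_add Bset_mult Bset_add distrib_right)
qed

lemma primeideal_from_seq:
  assumes sub: "Q \<subseteq> Bset"
    and z: "(\<lambda>n. 0) \<in> Q"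
    and ad: "\<And>a b. a \<in> Q \<Longrightarrow> b \<in> Q \<Longrightarrow> (\<lambda>n. a n + b n) \<in> Q"
    and ng: "\<And>a. a \<in> Q \<Longrightarrow> (\<lambda>n. - a n) \<in> Q"
    and ml: "\<And>a c. a \<in> Q \<Longrightarrow> c \<in> Bset \<Longrightarrow> (\<lambda>n. c n * a n) \<in> Q"
    and one: "(\<lambda>n. 1) \<notin> Q"
    and pr: "\<And>a b. a \<in> Bset \<Longrightarrow> b \<in> Bset \<Longrightarrow> (\<lambda>n. a n * b n) \<in> Q \<Longrightarrow> a \<in> Q \<or> b \<in> Q"
  shows "primeideal (Psi p ` Q) (A_ring p)"
proof -
  interpret R: cring "A_ring p" by (rule cring_R)
  have inj: "inj_on (Psi p) Bset" by (rule Psi_inj)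
  have mem: "a \<in> Bset \<Longrightarrow> Psi p a \<in> Psi p ` Q \<longleftrightarrow> a \<in> Q" for a
    using inj sub by (auto dest: inj_onD)
  have neg: "a \<in> Bset \<Longrightarrow> \<ominus>\<^bsub>A_ring p\<^esub> (Psi p a) = Psi p (\<lambda>n. - a n)" for a
    by (rule R.minus_equality) (simp_all add: Psi_add Bset_uminus zero_R carrier_R)
  show ?thesis
  proof (rule primeidealI2)
    show "additive_subgroup (Psi p ` Q) (A_ring p)"
    proof (rule additive_subgroupI, rule subgroup.intro)
      show "Psi p ` Q \<subseteq> carrier (add_monoid (A_ring p))"
        using sub by (auto simp: carrier_R)
      show "x \<otimes>\<^bsub>add_monoid (A_ring p)\<^esub> y \<in> Psi p ` Q" if "x \<in> Psi p ` Q" "y \<in> Psi p ` Q" for x y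
        using that sub by (auto simp: Psi_add ad subsetD)
      show "\<one>\<^bsub>add_monoid (A_ring p)\<^esub> \<in> Psi p ` Q" using z by (simp add: zero_R)
      show "inv\<^bsub>add_monoid (A_ring p)\<^esub> x \<in> Psi p ` Q" if "x \<in> Psi p ` Q" for x
      proof -
        from that obtain a where a: "a \<in> Q" "x = Psi p a" by blast
        have "inv\<^bsub>add_monoid (A_ring p)\<^esub> x = \<ominus>\<^bsub>A_ring p\<^esub> x" by (simp add: a_inv_def)
        also have "\<dots> = Psi p (\<lambda>n. - a n)" using a sub neg by auto
        finally show ?thesis using ng[OF a(1)] by simp
      qed
    qed
  next
    show "cring (A_ring p)" by (rule cring_R)
  next
    fix a x assume "a \<in> Psi p ` Q" "x \<in> carrier (A_ring p)"
    then show "x \<otimes>\<^bsub>A_ring p\<^esub> a \<in> Psi p ` Q"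
      using sub by (auto simp: carrier_R Psi_mult ml subsetD)
  next
    fix a x assume "a \<in> Psi p ` Q" "x \<in> carrier (A_ring p)"
    then obtain a' x' where "a' \<in> Q" "x' \<in> Bset" "a = Psi p a'" "x = Psi p x'"
      by (auto simp: carrier_R)
    moreover have "(\<lambda>n. a' n * x' n) = (\<lambda>n. x' n * a' n)" by (simp add: mult.commute)
    ultimately show "a \<otimes>\<^bsub>A_ring p\<^esub> x \<in> Psi p ` Q"
      using sub ml by (auto simp: Psi_mult subsetD)
  next
    show "carrier (A_ring p) \<noteq> Psi p ` Q"
    proof
      assume "carrier (A_ring p) = Psi p ` Q"
      moreover have "Psi p (\<lambda>n. 1) \<in> carrier (A_ring p)" using Bset_const by (simp add: carrier_R)
      ultimately show False using one mem[OF Bset_const] by simp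
    qed
  next
    fix a b assume "a \<in> carrier (A_ring p)" "b \<in> carrier (A_ring p)" "a \<otimes>\<^bsub>A_ring p\<^esub> b \<in> Psi p ` Q"
    then obtain a' b' where "a' \<in> Bset" "b' \<in> Bset" "a = Psi p a'" "b = Psi p b'"
      "Psi p (\<lambda>n. a' n * b' n) \<in> Psi p ` Q"
      by (auto simp: carrier_R Psi_mult)
    then show "a \<in> Psi p ` Q \<or> b \<in> Psi p ` Q"
      using mem pr Bset_mult by metis
  qed
qed

end



lemma ex_ultra:
  "\<exists>U::nat filter. U \<noteq> bot \<and> U \<le> sequentially \<and> (\<forall>P. eventually P U \<or> eventually (\<lambda>x. \<not> P x) U)"
proof -
  let ?F = "sequentially :: nat filter"
  let ?R = "{(b, a). a \<noteq> bot \<and> a \<le> b \<and> b \<le> ?F}"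
  have fld: "Field ?R = {G. G \<noteq> bot \<and> G \<le> ?F}"
    by (auto simp: Field_def bot_unique)
  have "\<exists>m\<in>Field ?R. \<forall>a\<in>Field ?R. (m, a) \<in> ?R \<longrightarrow> a = m"
  proof (rule Zorns_po_lemma)
    show "Partial_order ?R"
      by (auto simp: partial_order_on_def preorder_on_def
          antisym_def refl_on_def trans_def Field_def bot_unique)
    show "\<exists>u\<in>Field ?R. \<forall>a\<in>C. (a, u) \<in> ?R" if C: "C \<in> Chains ?R" for C
    proof (cases "C = {}")
      case True
      have "?F \<noteq> bot" by simp
      then show ?thesis using True by (intro bexI[of _ ?F]) (auto simp: fld)
    next
      case False
      have ch: "\<And>a b. a \<in> C \<Longrightarrow> b \<in> C \<Longrightarrow> a \<le> b \<or> b \<le> a"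
        using C by (auto simp: Chains_def)
      have nb: "\<And>a. a \<in> C \<Longrightarrow> a \<noteq> bot \<and> a \<le> ?F"
        using C by (auto simp: Chains_def)
      have ev: "eventually P (Inf C) \<longleftrightarrow> (\<exists>b\<in>C. eventually P b)" for P
      proof (rule eventually_Inf_base[OF False])
        fix a b assume "a \<in> C" "b \<in> C"
        then show "\<exists>x\<in>C. x \<le> inf a b"
        proof (cases "a \<le> b")
          case True
          then show ?thesis using \<open>a \<in> C\<close> by (intro bexI[of _ a]) (auto simp: inf.absorb1)
        next
          case False
          then have "b \<le> a" using ch[OF \<open>a \<in> C\<close> \<open>b \<in> C\<close>] by blast
          then show ?thesis using \<open>b \<in> C\<close> by (intro bexI[of _ b]) (auto simp: inf.absorb2)
        qed
      qed
      have "Inf C \<noteq> bot"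
        unfolding trivial_limit_def ev using nb by (auto simp: trivial_limit_def)
      moreover obtain x where x: "x \<in> C" using False by blast
      moreover have "Inf C \<le> ?F" using x nb by (meson Inf_lower order_trans)
      ultimately show ?thesis
        using nb by (intro bexI[of _ "Inf C"]) (auto simp: fld intro: Inf_lower)
    qed
  qed
  then obtain m where m: "m \<noteq> bot" "m \<le> ?F"
    and max: "\<And>G. G \<noteq> bot \<Longrightarrow> G \<le> m \<Longrightarrow> G = m"
    unfolding fld by auto
  have "eventually P m \<or> eventually (\<lambda>x. \<not> P x) m" for P
  proof (rule disjCI)
    assume "\<not> eventually (\<lambda>x. \<not> P x) m"
    then have "inf m (principal {x. P x}) \<noteq> bot"
      by (simp add: trivial_limit_def eventually_inf_principal not_eventually)
    then have eq: "inf m (principal {x. P x}) = m" by (rule max) simp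
    have "eventually P (inf m (principal {x. P x}))"
      by (simp add: eventually_inf_principal)
    then show "eventually P m" by (simp only: eq)
  qed
  with m show ?thesis by blast
qed




definition tsc :: "nat \<Rightarrow> nat \<Rightarrow> real" where
  "tsc k n = (1/2) ^ ((n+1)^k)"

definition Qs :: "nat filter \<Rightarrow> (nat \<Rightarrow> real) \<Rightarrow> (nat \<Rightarrow> complex) set" where
  "Qs U t = {a \<in> Bset. \<forall>M. eventually (\<lambda>n. norm (a n) \<le> t n ^ M) U}"

lemma tsc_bounds: "0 < tsc k n" "tsc k n \<le> 1/2"
proof -
  show "0 < tsc k n" by (simp add: tsc_def)
  have "(1/2::real) ^ ((n+1)^k) \<le> (1/2) ^ 1"
    by (rule power_decreasing) auto
  then show "tsc k n \<le> 1/2" by (simp add: tsc_def)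
qed

context
  fixes U :: "nat filter" and t :: "nat \<Rightarrow> real"
  assumes U: "U \<noteq> bot" "\<And>P. eventually P U \<or> eventually (\<lambda>x. \<not> P x) U"
    and t: "\<And>n. 0 < t n" "\<And>n. t n \<le> 1/2"
begin

lemma Qs_sub: "Qs U t \<subseteq> Bset" by (auto simp: Qs_def)

lemma Qs_zero: "(\<lambda>n. 0) \<in> Qs U t"
  using t by (auto simp: Qs_def Bset_const less_imp_le)

lemma Qs_add:
  assumes a: "a \<in> Qs U t" and b: "b \<in> Qs U t"
  shows "(\<lambda>n. a n + b n) \<in> Qs U t"
proof -
  have "eventually (\<lambda>n. norm (a n + b n) \<le> t n ^ M) U" for M
  proof -
    have "\<forall>M. eventually (\<lambda>n. norm (a n) \<le> t n ^ M) U" "\<forall>M. eventually (\<lambda>n. norm (b n) \<le> t n ^ M) U"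
      using a b by (auto simp: Qs_def)
    then have "eventually (\<lambda>n. norm (a n) \<le> t n ^ Suc M) U" "eventually (\<lambda>n. norm (b n) \<le> t n ^ Suc M) U"
      by blast+
    then show ?thesis
    proof eventually_elim
      case (elim n)
      have "norm (a n + b n) \<le> 2 * t n * t n ^ M" using elim norm_triangle_ineq[of "a n" "b n"] by simp
      also have "\<dots> \<le> 1 * t n ^ M"
        using t[of n] by (intro mult_right_mono) auto
      finally show ?case by simp
    qed
  qed
  then show ?thesis using a b by (auto simp: Qs_def Bset_add)
qed

lemma Qs_neg: "a \<in> Qs U t \<Longrightarrow> (\<lambda>n. - a n) \<in> Qs U t"
  by (auto simp: Qs_def Bset_uminus)

lemma Qs_mult:
  assumes a: "a \<in> Qs U t" and c: "c \<in> Bset"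
  shows "(\<lambda>n. c n * a n) \<in> Qs U t"
proof -
  obtain C where C: "\<And>n. norm (c n) \<le> C" using c unfolding Bset_def by blast
  have C0: "0 \<le> C" using C[of 0] norm_ge_zero order_trans by blast
  obtain K where K: "C < 2 ^ K" using real_arch_pow[of 2 C] by auto
  have "eventually (\<lambda>n. norm (c n * a n) \<le> t n ^ M) U" for M
  proof -
    have "eventually (\<lambda>n. norm (a n) \<le> t n ^ (K + M)) U" using a by (auto simp: Qs_def)
    then show ?thesis
    proof eventually_elim
      case (elim n)
      have tn: "0 < t n" "t n \<le> 1/2" using t by auto
      have "norm (c n * a n) \<le> C * t n ^ (K + M)"
        unfolding norm_mult using elim C C0 by (intro mult_mono) auto
      also have "\<dots> \<le> 2 ^ K * t n ^ (K + M)"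
        using K tn by (intro mult_right_mono) auto
      also have "\<dots> = (2 * t n) ^ K * t n ^ M" by (simp add: power_add power_mult_distrib)
      also have "\<dots> \<le> 1 * t n ^ M"
        using tn by (intro mult_right_mono power_le_one) auto
      finally show ?case by simp
    qed
  qed
  then show ?thesis using a c by (auto simp: Qs_def Bset_mult)
qed

lemma Qs_one: "(\<lambda>n. 1) \<notin> Qs U t"
proof
  assume "(\<lambda>n. 1) \<in> Qs U t"
  then have "\<forall>M. eventually (\<lambda>n. norm (1::complex) \<le> t n ^ M) U" by (simp add: Qs_def)
  then have "eventually (\<lambda>n. norm (1::complex) \<le> t n ^ 1) U" by blast
  then have "eventually (\<lambda>n. False) U"
  proof (rule eventually_mono)
    fix n assume "norm (1::complex) \<le> t n ^ 1"
    then show False using t(2)[of n] by simp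
  qed
  with U show False by simp
qed

lemma Qs_prime:
  assumes a: "a \<in> Bset" and b: "b \<in> Bset" and ab: "(\<lambda>n. a n * b n) \<in> Qs U t"
  shows "a \<in> Qs U t \<or> b \<in> Qs U t"
proof (rule ccontr)
  assume "\<not> (a \<in> Qs U t \<or> b \<in> Qs U t)"
  then obtain M1 M2 where "\<not> eventually (\<lambda>n. norm (a n) \<le> t n ^ M1) U"
    "\<not> eventually (\<lambda>n. norm (b n) \<le> t n ^ M2) U"
    using a b by (auto simp: Qs_def)
  then have "eventually (\<lambda>n. \<not> norm (a n) \<le> t n ^ M1) U" "eventually (\<lambda>n. \<not> norm (b n) \<le> t n ^ M2) U"
    using U(2) by blast+
  moreover have "eventually (\<lambda>n. norm (a n * b n) \<le> t n ^ (M1 + M2)) U"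
    using ab by (auto simp: Qs_def)
  ultimately have "eventually (\<lambda>n. False) U"
  proof eventually_elim
    case (elim n)
    have "t n ^ M1 * t n ^ M2 < norm (a n) * norm (b n)"
      using elim t[of n] by (intro mult_strict_mono) auto
    then show ?case using elim by (simp add: power_add norm_mult)
  qed
  with U show False by simp
qed

end

lemma Qs_mono:
  assumes tt: "\<And>n. 0 \<le> t' n \<and> t' n \<le> t n"
  shows "Qs U t' \<subseteq> Qs U t"
proof
  fix a assume a: "a \<in> Qs U t'"
  have "eventually (\<lambda>n. norm (a n) \<le> t n ^ M) U" for M
  proof -
    have "eventually (\<lambda>n. norm (a n) \<le> t' n ^ M) U" using a by (simp add: Qs_def)
    then show ?thesis
    proof eventually_elim
      case (elim n)
      have "t' n ^ M \<le> t n ^ M" using tt[of n] by (intro power_mono) auto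
      then show ?case using elim by linarith
    qed
  qed
  then show "a \<in> Qs U t" using a by (simp add: Qs_def)
qed




lemma tsc_mono: "tsc (Suc k) n \<le> tsc k n"
  unfolding tsc_def by (rule power_decreasing) (auto intro: power_increasing)

lemma tsc_strict:
  assumes U: "U \<noteq> bot" "U \<le> sequentially"
  shows "(\<lambda>n. complex_of_real (tsc (Suc k) n)) \<in> Qs U (tsc k)"
        "(\<lambda>n. complex_of_real (tsc (Suc k) n)) \<notin> Qs U (tsc (Suc k))"
proof -
  have B: "(\<lambda>n. complex_of_real (tsc (Suc k) n)) \<in> Bset"
    unfolding Bset_def using tsc_bounds(1)[of "Suc k"] tsc_bounds(2)[of "Suc k"]
    by (intro CollectI exI[of _ "1/2"]) (auto simp: less_imp_le)
  have "eventually (\<lambda>n. norm (complex_of_real (tsc (Suc k) n)) \<le> tsc k n ^ M) U" for M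
  proof (rule filter_leD[OF U(2)])
    show "eventually (\<lambda>n. norm (complex_of_real (tsc (Suc k) n)) \<le> tsc k n ^ M) sequentially"
      using eventually_ge_at_top[of M]
    proof eventually_elim
      case (elim n)
      have "(n+1)^k * M \<le> (n+1)^k * (n+1)" using elim by (intro mult_left_mono) auto
      then have "(1/2::real) ^ ((n+1)^Suc k) \<le> (1/2) ^ ((n+1)^k * M)"
        by (intro power_decreasing) (auto simp: mult.commute)
      moreover have "norm (complex_of_real (tsc (Suc k) n)) = tsc (Suc k) n"
        using tsc_bounds(1)[of "Suc k" n] by simp
      ultimately show ?case
        by (simp add: tsc_def power_mult)
    qed
  qed
  with B show "(\<lambda>n. complex_of_real (tsc (Suc k) n)) \<in> Qs U (tsc k)" by (simp add: Qs_def)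
  show "(\<lambda>n. complex_of_real (tsc (Suc k) n)) \<notin> Qs U (tsc (Suc k))"
  proof
    assume "(\<lambda>n. complex_of_real (tsc (Suc k) n)) \<in> Qs U (tsc (Suc k))"
    then have "\<forall>M. eventually (\<lambda>n. norm (complex_of_real (tsc (Suc k) n)) \<le> tsc (Suc k) n ^ M) U"
      by (simp add: Qs_def)
    then have "eventually (\<lambda>n. norm (complex_of_real (tsc (Suc k) n)) \<le> tsc (Suc k) n ^ 2) U"
      by blast
    then have "eventually (\<lambda>n. False) U"
    proof (rule eventually_mono)
      fix n assume h: "norm (complex_of_real (tsc (Suc k) n)) \<le> tsc (Suc k) n ^ 2"
      have t0: "0 < tsc (Suc k) n" "tsc (Suc k) n \<le> 1/2" using tsc_bounds by auto
      then have "tsc (Suc k) n * tsc (Suc k) n < tsc (Suc k) n * 1"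
        by (intro mult_strict_left_mono) auto
      then show False using h t0 by (simp add: power2_eq_square)
    qed
    with U show False by simp
  qed
qed

theorem mainTheorem13:
  fixes p :: "nat \<Rightarrow> real"
  assumes pos: "\<And>n. p n > 0"
    and growth: "filterlim (\<lambda>n. root n (p n)) at_top sequentially"
  shows "\<forall>N::nat. \<exists>P :: nat \<Rightarrow> (complex \<Rightarrow> complex) set.
           (\<forall>i\<in>{1..N+1}. primeideal (P i) (A_ring p)) \<and>
           (\<forall>i\<in>{1..N}. P (i + 1) \<subset> P i)"
proof
  fix N :: nat
  obtain U :: "nat filter" where U: "U \<noteq> bot" "U \<le> sequentially"
    "\<And>P. eventually P U \<or> eventually (\<lambda>x. \<not> P x) U"
    using ex_ultra by blast
  define P where "P i = Psi p ` Qs U (tsc i)" for i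
  have prime: "primeideal (P i) (A_ring p)" for i
    unfolding P_def
  proof (rule primeideal_from_seq[OF pos growth])
    note tb = tsc_bounds[of i]
    show "Qs U (tsc i) \<subseteq> Bset" by (rule Qs_sub[OF U(1,3) tb])
    show "(\<lambda>n. 0) \<in> Qs U (tsc i)" by (rule Qs_zero[OF U(1,3) tb])
    show "\<And>a b. a \<in> Qs U (tsc i) \<Longrightarrow> b \<in> Qs U (tsc i) \<Longrightarrow> (\<lambda>n. a n + b n) \<in> Qs U (tsc i)"
      by (rule Qs_add[OF U(1,3) tb])
    show "\<And>a. a \<in> Qs U (tsc i) \<Longrightarrow> (\<lambda>n. - a n) \<in> Qs U (tsc i)"
      by (rule Qs_neg[OF U(1,3) tb])
    show "\<And>a c. a \<in> Qs U (tsc i) \<Longrightarrow> c \<in> Bset \<Longrightarrow> (\<lambda>n. c n * a n) \<in> Qs U (tsc i)"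
      by (rule Qs_mult[OF U(1,3) tb])
    show "(\<lambda>n. 1) \<notin> Qs U (tsc i)" by (rule Qs_one[OF U(1,3) tb])
    show "\<And>a b. a \<in> Bset \<Longrightarrow> b \<in> Bset \<Longrightarrow> (\<lambda>n. a n * b n) \<in> Qs U (tsc i)
            \<Longrightarrow> a \<in> Qs U (tsc i) \<or> b \<in> Qs U (tsc i)"
      by (rule Qs_prime[OF U(1,3) tb])
  qed
  have strict: "P (i + 1) \<subset> P i" for i
  proof -
    have sub: "Qs U (tsc (Suc i)) \<subseteq> Qs U (tsc i)"
      by (rule Qs_mono) (use tsc_mono tsc_bounds(1) in \<open>auto simp: less_imp_le\<close>)
    have "Qs U (tsc (Suc i)) \<subset> Qs U (tsc i)"
      using sub tsc_strict[OF U(1,2), of i] by blast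
    moreover have "inj_on (Psi p) (Qs U (tsc i))"
      by (rule inj_on_subset[OF Psi_inj[OF pos growth] Qs_sub[OF U(1,3) tsc_bounds]])
    ultimately show ?thesis unfolding P_def by (simp add: image_strict_mono)
  qed
  show "\<exists>P :: nat \<Rightarrow> (complex \<Rightarrow> complex) set.
           (\<forall>i\<in>{1..N+1}. primeideal (P i) (A_ring p)) \<and>
           (\<forall>i\<in>{1..N}. P (i + 1) \<subset> P i)"
    by (intro exI[of _ P] conjI ballI prime strict)
qed


end
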